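(* Suppose $\|\phi-\phi^\star\|_H\le\frac{\|(I-P_G)H^{-1/2}\Sigma^{-1/2}\|_2}{3L\,\|H^{-1/2}\Sigma^{-1/2}\|_2}$ and $\|P_GH^{-1/2}(w-w^\star)\|_2\le\frac{1}{12L}$. Then, with $$c:=\frac{5}{\sqrt d}\,\|w^\star\|_\Sigma\,\big\|(I-P_G)H^{-1/2}\Sigma^{-1/2}\big\|_2^2,$$ we have $$\|\phi-\phi^\star\|_{\Sigma^{-1}}\le c\sqrt d\,\frac{\|w-w^\star\|_\Sigma}{\|w^\star\|_\Sigma}\qquad\text{and}\qquad w^\top(\phi-\phi^\star)\le c\sqrt d\,\|w^\star\|_\Sigma\Big\{\frac{\|w-w^\star\|_\Sigma}{\|w^\star\|_\Sigma}\Big\}^2.$$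
   Context: Let $m\le d$ and $g=(g_1,\dots,g_m):\mathbb R^d\to\mathbb R^m$, each $g_i$ strongly convex and twice differentiable; $\Phi=\{x\in\mathbb R^d:g(x)\le0\}$; $\nabla g(x)\in\mathbb R^{m\times d}$ is the Jacobian (rows $\nabla g_i(x)^\top$). For $w^\star,w\in\mathbb R^d$ let $\phi^\star=\arg\max_{x\in\Phi}x^\top w^\star$ and $\phi=\arg\max_{x\in\Phi}x^\top w$, with all constraints active: $g(\phi^\star)=g(\phi)=0$. Let $\lambda^\star,\lambda\in\mathbb R^m_{\ge0}$ be Lagrange (KKT) multipliers with $w^\star=\nabla g(\phi^\star)^\top\lambda^\star$, $w=\nabla g(\phi)^\top\lambda$. $H=\sum_{i=1}^m\lambda^\star_i\nabla^2g_i(\phi^\star)$, assumed positive definite; $\|x\|_M=\sqrt{x^\top Mx}$. $W=\nabla g(\phi^\star)H^{-1}\nabla g(\phi^\star)^\top\in\mathbb R^{m\times m}$, assumed invertible. $P_G=H^{-1/2}\nabla g(\phi^\star)^\top W^{-1}\nabla g(\phi^\star)H^{-1/2}$ (orthogonal projection onto the span of the columns of $H^{-1/2}\nabla g(\phi^\star)^\top$). Smoothness: (S1) $\|\{\nabla g(\phi)-\nabla g(\phi^\star)\}^\top\lambda^\star-H(\phi-\phi^\star)\|_{H^{-1}}\le\frac14\|\phi-\phi^\star\|_H$; (S2) there is $L>0$ with $\|W^{-1/2}\{\nabla g(x)-\nabla g(\phi^\star)\}H^{-1/2}\|_2\le L\|x-\phi^\star\|_H$ for all $x\in\mathbb R^d$.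 $\Sigma\in\mathbb R^{d\times d}$ is a positive definite matrix (the feature covariance under the optimal policy's occupation measure). *)

theory Defs
  imports "HOL-Analysis.Analysis"
begin

definition pos_def_mat :: "real^'n^'n \<Rightarrow> bool" where
  "pos_def_mat M \<longleftrightarrow> transpose M = M \<and> (\<forall>x. x \<noteq> 0 \<longrightarrow> x \<bullet> (M *v x) > 0)"

definition psd_mat :: "real^'n^'n \<Rightarrow> bool" where
  "psd_mat M \<longleftrightarrow> transpose M = M \<and> (\<forall>x. x \<bullet> (M *v x) \<ge> 0)"

definition msqrt :: "real^'n^'n \<Rightarrow> real^'n^'n" where
  "msqrt M = (THE S. psd_mat S \<and> S ** S = M)"

definition minvsqrt :: "real^'n^'n \<Rightarrow> real^'n^'n" where
  "minvsqrt M = matrix_inv (msqrt M)"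

definition wnorm :: "real^'n \<Rightarrow> real^'n^'n \<Rightarrow> real" where
  "wnorm x M = sqrt (x \<bullet> (M *v x))"

definition opnorm2 :: "real^'n^'m \<Rightarrow> real" where
  "opnorm2 A = onorm (\<lambda>x. A *v x)"

end

theory Submission
  imports Defs
begin


function aa :: "nat \<Rightarrow> real" where
  "aa n = (if n = 0 then 0 else if n = 1 then 1/2
           else (\<Sum>j\<in>{1..<n}. aa j * aa (n - j)) / 2)"
  by auto
termination by (relation "Wellfounded.measure id") auto

declare aa.simps[simp del]

lemma aa_0[simp]: "aa 0 = 0" by (simp add: aa.simps)
lemma aa_1[simp]: "aa (Suc 0) = 1/2" by (simp add: aa.simps)

lemma aa_nonneg: "aa n \<ge> 0"
proof (induction n rule: less_induct)
  case (less n)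
  show ?case
    apply (subst aa.simps)
    using less by (auto intro!: sum_nonneg mult_nonneg_nonneg)
qed

lemma aa_conv: "(\<Sum>j\<le>k. aa j * aa (k - j)) = 2 * aa k - (if k = 1 then 1 else 0)"
proof -
  consider "k = 0" | "k = 1" | "k \<ge> 2" by linarith
  then show ?thesis
  proof cases
    case 1 then show ?thesis by simp
  next
    case 2 then show ?thesis by (simp add: atMost_Suc)
  next
    case 3
    have split: "{..k} = insert 0 (insert k {1..<k})" using 3 by auto
    have "(\<Sum>j\<le>k. aa j * aa (k - j)) = (\<Sum>j\<in>{1..<k}. aa j * aa (k - j))"
      using 3 by (simp add: split)
    also have "\<dots> = 2 * aa k" using 3 by (subst (2) aa.simps) simp
    finally show ?thesis using 3 by simp
  qed
qed

lemma aa_tri: "(\<Sum>(j,l)\<in>{(j,l). j + l < N}. aa j * aa l) = 2 * (\<Sum>k<N. aa k) - (if N \<ge> 2 then 1 else 0)"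
proof -
  have "(\<Sum>(j,l)\<in>{(j,l). j + l < N}. aa j * aa l) = (\<Sum>k<N. \<Sum>j\<le>k. aa j * aa (k - j))"
    by (rule sum.triangle_reindex)
  also have "\<dots> = (\<Sum>k<N. 2 * aa k - (if k = 1 then 1 else 0))" by (simp add: aa_conv)
  also have "\<dots> = 2 * (\<Sum>k<N. aa k) - (\<Sum>k<N. (if k = 1 then 1 else 0))"
    by (simp add: sum_subtractf sum_distrib_left)
  also have "(\<Sum>k<N. (if k = 1 then 1 else 0::real)) = (if N \<ge> 2 then 1 else 0)"
    by (simp add: sum.delta)
  finally show ?thesis .
qed

lemma aa_prod_nonneg: "0 \<le> aa j * aa l" by (simp add: aa_nonneg)

lemma sq_sum_aa: "(\<Sum>k<N. aa k)^2 = (\<Sum>(j,l)\<in>{..<N}\<times>{..<N}. aa j * aa l)"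
  by (simp add: power2_eq_square sum_product sum.cartesian_product)

lemma aa_upper_step:
  assumes "N \<ge> 2"
  shows "2 * (\<Sum>k<N. aa k) - 1 \<le> (\<Sum>k<N - 1. aa k)^2"
proof -
  let ?T = "{(j,l). j + l < N}"
  let ?T' = "{(j,l). j + l < N \<and> 0 < j \<and> 0 < l}"
  have fin: "finite ?T"
    by (rule finite_subset[of _ "{..<N}\<times>{..<N}"]) auto
  have "(\<Sum>(j,l)\<in>?T. aa j * aa l) = (\<Sum>(j,l)\<in>?T'. aa j * aa l)"
    by (rule sum.mono_neutral_right[OF fin]) (auto, (metis aa_0 gr0I)+)
  also have "\<dots> \<le> (\<Sum>(j,l)\<in>{..<N-1}\<times>{..<N-1}. aa j * aa l)"
    by (rule sum_mono2) (auto simp: aa_prod_nonneg)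
  finally show ?thesis using assms by (simp add: aa_tri sq_sum_aa)
qed

lemma aa_sum_le1: "(\<Sum>k<N. aa k) \<le> 1"
proof (induction N rule: less_induct)
  case (less N)
  show ?case
  proof (cases "N \<ge> 2")
    case True
    have "(\<Sum>k<N - 1. aa k) \<le> 1" using less True by simp
    moreover have "0 \<le> (\<Sum>k<N - 1. aa k)" by (simp add: sum_nonneg aa_nonneg)
    ultimately have "(\<Sum>k<N - 1. aa k)^2 \<le> 1" by (simp add: power_le_one)
    then show ?thesis using aa_upper_step[OF True] by simp
  next
    case False
    then have "N = 0 \<or> N = 1" by auto
    then show ?thesis by auto
  qed
qed

lemma aa_summable: "summable aa"
  by (rule summableI_nonneg_bounded[where x=1]) (auto simp: aa_nonneg aa_sum_le1)

lemma aa_lower_step: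
  assumes "N \<ge> 1"
  shows "(\<Sum>k<N. aa k)^2 \<le> 2 * (\<Sum>k<2*N. aa k) - 1"
proof -
  have fin: "finite {(j,l). j + l < 2*N}"
    by (rule finite_subset[of _ "{..<2*N}\<times>{..<2*N}"]) auto
  have "(\<Sum>(j,l)\<in>{..<N}\<times>{..<N}. aa j * aa l) \<le> (\<Sum>(j,l)\<in>{(j,l). j + l < 2*N}. aa j * aa l)"
    by (rule sum_mono2[OF fin]) (auto simp: aa_prod_nonneg)
  then show ?thesis using assms by (simp add: aa_tri sq_sum_aa)
qed

lemma aa_suminf: "suminf aa = 1"
proof -
  let ?s = "suminf aa"
  have le: "?s \<le> 1" by (rule suminf_le_const[OF aa_summable]) (simp add: aa_sum_le1)
  have ps: "\<And>n. (\<Sum>k<n. aa k) \<le> ?s"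
    by (rule sum_le_suminf[OF aa_summable]) (auto simp: aa_nonneg)
  have lim: "(\<lambda>N. (\<Sum>k<N. aa k)^2) \<longlonglongrightarrow> ?s^2"
    by (intro tendsto_intros summable_LIMSEQ[OF aa_summable])
  have ev: "\<forall>\<^sub>F N in sequentially. (\<Sum>k<N. aa k)^2 \<le> 2 * ?s - 1"
    using eventually_ge_at_top[of 1]
  proof eventually_elim
    case (elim N)
    from aa_lower_step[OF elim] ps[of "2*N"] show ?case by linarith
  qed
  have "?s^2 \<le> 2 * ?s - 1" by (rule tendsto_le[OF _ tendsto_const lim ev]) simp
  then have "(?s - 1)^2 \<le> 0" by (simp add: power2_eq_square algebra_simps)
  then show ?thesis by simp
qed




lemma mm_sub_ldistrib: "(A::real^'n^'m) ** (B - C) = A ** B - A ** C"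
  by (simp add: vec_eq_iff matrix_matrix_mult_def sum_subtractf algebra_simps)
lemma mm_add_rdistrib: "((A::real^'n^'m) + B) ** C = A ** C + B ** C"
  by (simp add: vec_eq_iff matrix_matrix_mult_def sum.distrib algebra_simps)
lemma mm_sub_rdistrib: "((A::real^'n^'m) - B) ** C = A ** C - B ** C"
  by (simp add: vec_eq_iff matrix_matrix_mult_def sum_subtractf algebra_simps)
lemma mm_scaleR_left: "((c::real) *\<^sub>R (A::real^'n^'m)) ** B = c *\<^sub>R (A ** B)"
  by (simp add: vec_eq_iff matrix_matrix_mult_def sum_distrib_left algebra_simps)
lemma mm_scaleR_right: "(A::real^'n^'m) ** ((c::real) *\<^sub>R B) = c *\<^sub>R (A ** B)"
  by (simp add: vec_eq_iff matrix_matrix_mult_def sum_distrib_left algebra_simps)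
lemma mm_sum_left: "(\<Sum>i\<in>I. f i :: real^'n^'m) ** B = (\<Sum>i\<in>I. f i ** B)"
  by (simp add: vec_eq_iff matrix_matrix_mult_def sum_distrib_right) (intro allI sum.swap)
lemma mm_sum_right: "(B :: real^'n^'m) ** (\<Sum>i\<in>I. f i) = (\<Sum>i\<in>I. B ** f i)"
  by (simp add: vec_eq_iff matrix_matrix_mult_def sum_distrib_left) (intro allI sum.swap)
lemma mv_sum_left: "(\<Sum>i\<in>I. f i :: real^'n^'m) *v x = (\<Sum>i\<in>I. f i *v x)"
  by (simp add: vec_eq_iff matrix_vector_mult_def sum_distrib_right) (intro allI sum.swap)
lemma mv_scaleR_left: "((c::real) *\<^sub>R (A::real^'n^'m)) *v x = c *\<^sub>R (A *v x)"
  by (simp add: vec_eq_iff matrix_vector_mult_def sum_distrib_left algebra_simps)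
lemma mv_sub_left: "((A::real^'n^'m) - B) *v x = A *v x - B *v x"
  by (simp add: vec_eq_iff matrix_vector_mult_def sum_subtractf algebra_simps)
lemma mv_add_left: "((A::real^'n^'m) + B) *v x = A *v x + B *v x"
  by (simp add: vec_eq_iff matrix_vector_mult_def sum.distrib algebra_simps)
lemma transpose_sub: "transpose ((A::real^'n^'m) - B) = transpose A - transpose B"
  by (simp add: vec_eq_iff transpose_def)
lemma transpose_add: "transpose ((A::real^'n^'m) + B) = transpose A + transpose B"
  by (simp add: vec_eq_iff transpose_def)

lemma inner_transpose: "inner y ((M::real^'n^'m) *v x) = inner (transpose M *v y) x"
  by (simp add: dot_lmul_matrix)

lemma inner_sym: "transpose M = M \<Longrightarrow> inner y ((M::real^'n^'n) *v x) = inner (M *v y) x"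
  by (metis inner_transpose)

lemma mv_entry: "((M::real^'n^'m) *v axis j 1) $ i = M $ i $ j"
  by (simp add: matrix_vector_mult_def axis_def if_distrib if_distribR sum.delta' cong: if_cong)

lemma entry_le_opnorm: 
  assumes "\<And>x. norm ((M::real^'n^'m) *v x) \<le> c * norm x"
  shows "\<bar>M $ i $ j\<bar> \<le> c"
  by (metis assms component_le_norm_cart mv_entry mult.right_neutral norm_axis_1 order_trans)

lemma tendsto_mmult:
  fixes X :: "'a \<Rightarrow> real^'n^'m" and Y :: "'a \<Rightarrow> real^'p^'n"
  assumes "(X \<longlongrightarrow> A) F" "(Y \<longlongrightarrow> B) F"
  shows "((\<lambda>t. X t ** Y t) \<longlongrightarrow> A ** B) F"
  unfolding matrix_matrix_mult_def
  by (intro vec_tendstoI) (simp, intro tendsto_intros assms)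

lemma tendsto_mvmult:
  fixes X :: "'a \<Rightarrow> real^'n^'m"
  assumes "(X \<longlongrightarrow> A) F" "(y \<longlongrightarrow> b) F"
  shows "((\<lambda>t. X t *v y t) \<longlongrightarrow> A *v b) F"
  unfolding matrix_vector_mult_def
  by (intro vec_tendstoI) (simp, intro tendsto_intros assms)

lemma tendsto_transpose:
  fixes X :: "'a \<Rightarrow> real^'n^'m"
  assumes "(X \<longlongrightarrow> A) F"
  shows "((\<lambda>t. transpose (X t)) \<longlongrightarrow> transpose A) F"
  unfolding transpose_def
  by (intro vec_tendstoI) (simp, intro tendsto_intros assms)

primrec mpow :: "real^'n^'n \<Rightarrow> nat \<Rightarrow> real^'n^'n" where
  "mpow B 0 = mat 1"
| "mpow B (Suc k) = B ** mpow B k"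

lemma mpow_add: "mpow B (j + l) = mpow B j ** mpow B l"
  by (induction j) (simp_all add: matrix_mul_assoc)

lemma mpow_1: "mpow B (Suc 0) = B" by simp

lemma mpow_comm:
  assumes "C ** B = B ** C"
  shows "C ** mpow B k = mpow B k ** C"
proof (induction k)
  case 0 then show ?case by simp
next
  case (Suc k)
  have "C ** (B ** mpow B k) = B ** (C ** mpow B k)"
    by (metis assms matrix_mul_assoc)
  also have "\<dots> = (B ** mpow B k) ** C" by (simp add: Suc matrix_mul_assoc)
  finally show ?case by simp
qed

lemma mpow_sym:
  assumes "transpose B = B"
  shows "transpose (mpow B k) = mpow B k"
proof (induction k)
  case 0 then show ?case by simp
next
  case (Suc k)
  have "transpose (B ** mpow B k) = mpow B k ** B"
    by (simp add: matrix_transpose_mul Suc assms)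
  also have "\<dots> = B ** mpow B k" using mpow_comm[of B B k] by simp
  finally show ?case by simp
qed

lemma mpow_norm:
  assumes "\<And>x. norm (B *v x) \<le> norm x"
  shows "norm (mpow B k *v x) \<le> norm x"
proof (induction k)
  case 0 then show ?case by simp
next
  case (Suc k)
  have "norm (mpow B (Suc k) *v x) = norm (B *v (mpow B k *v x))"
    by (simp add: matrix_vector_mul_assoc)
  also have "\<dots> \<le> norm x" using assms Suc order_trans by blast
  finally show ?case .
qed

lemma mpow_entry:
  assumes "\<And>x. norm (B *v x) \<le> norm x"
  shows "\<bar>mpow B k $ i $ j\<bar> \<le> 1"
  by (rule entry_le_opnorm) (simp add: mpow_norm[OF assms])




lemma sqrt_series:
  fixes B :: "real^'n^'n"
  assumes symB: "transpose B = B" and nB: "\<And>x. norm (B *v x) \<le> norm x"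
  shows "\<exists>S. transpose S = S \<and> (\<forall>x. 0 \<le> inner x (S *v x)) \<and> S ** S = mat 1 - B
             \<and> (\<forall>C. C ** B = B ** C \<longrightarrow> C ** S = S ** C)"
proof -
  define RN where "RN N = (\<Sum>k<N. aa k *\<^sub>R mpow B k)" for N
  define R where "R = (\<chi> i j. \<Sum>k. aa k * mpow B k $ i $ j)"
  have summ: "summable (\<lambda>k. aa k * mpow B k $ i $ j)" for i j
  proof (rule summable_comparison_test'[OF aa_summable])
    fix k
    have "\<bar>aa k * mpow B k $ i $ j\<bar> = aa k * \<bar>mpow B k $ i $ j\<bar>"
      by (simp add: abs_mult aa_nonneg)
    also have "\<dots> \<le> aa k * 1"
      by (rule mult_left_mono[OF mpow_entry[OF nB] aa_nonneg])
    finally show "norm (aa k * mpow B k $ i $ j) \<le> aa k" by simp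
  qed
  have RN_lim: "RN \<longlonglongrightarrow> R"
    by (intro vec_tendstoI) (simp add: RN_def R_def summable_LIMSEQ[OF summ])
  define c where "c p = aa (fst p) * aa (snd p)" for p :: "nat \<times> nat"
  define f where "f p = c p *\<^sub>R mpow B (fst p + snd p)" for p :: "nat \<times> nat"
  define P where "P N = {..<N} \<times> {..<N}" for N :: nat
  define T where "T N = {(j,l). j + l < (N::nat)}" for N
  define E where "E N = (\<Sum>p\<in>P N - T N. f p)" for N
  have TP: "T N \<subseteq> P N" for N by (auto simp: T_def P_def)
  have finP: "finite (P N)" for N by (simp add: P_def)
  have key: "RN N ** RN N = 2 *\<^sub>R RN N - B + E N" if N2: "N \<ge> 2" for N
  proof -
    have "RN N ** RN N = (\<Sum>j<N. \<Sum>l<N. f (j, l))"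
      by (simp add: RN_def f_def c_def mm_sum_left mm_sum_right mm_scaleR_left mm_scaleR_right
          mpow_add[symmetric] scaleR_sum_right) (simp only: add.commute)
    also have "\<dots> = sum f (P N)" by (simp add: P_def sum.cartesian_product)
    also have "\<dots> = E N + sum f (T N)" unfolding E_def by (rule sum.subset_diff[OF TP finP])
    also have "sum f (T N) = (\<Sum>(i,j)\<in>{(i,j). i + j < N}. f (i, j))" by (simp add: T_def)
    also have "\<dots> = (\<Sum>k<N. \<Sum>i\<le>k. f (i, k - i))" by (rule sum.triangle_reindex)
    also have "\<dots> = (\<Sum>k<N. (\<Sum>i\<le>k. aa i * aa (k - i)) *\<^sub>R mpow B k)"
      by (simp add: f_def c_def scaleR_sum_left)
    also have "\<dots> = (\<Sum>k<N. (2 * aa k) *\<^sub>R mpow B k - (if k = 1 then mpow B k else 0))"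
      by (intro sum.cong refl) (simp add: aa_conv algebra_simps)
    also have "\<dots> = 2 *\<^sub>R RN N - B"
      using N2 by (simp add: sum_subtractf RN_def scaleR_sum_right sum.delta)
    finally show ?thesis by simp
  qed
  define s where "s N = (\<Sum>k<N. aa k)" for N
  have Ebound: "\<bar>E N $ i $ j\<bar> \<le> (1 - s N)^2" if N2: "N \<ge> 2" for N i j
  proof -
    have "\<bar>E N $ i $ j\<bar> = \<bar>\<Sum>p\<in>P N - T N. c p * mpow B (fst p + snd p) $ i $ j\<bar>"
      by (simp add: E_def f_def)
    also have "\<dots> \<le> (\<Sum>p\<in>P N - T N. \<bar>c p * mpow B (fst p + snd p) $ i $ j\<bar>)"
      by (rule sum_abs)
    also have "\<dots> \<le> (\<Sum>p\<in>P N - T N. c p)"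
    proof (rule sum_mono)
      fix p
      have "\<bar>c p * mpow B (fst p + snd p) $ i $ j\<bar> = c p * \<bar>mpow B (fst p + snd p) $ i $ j\<bar>"
        by (simp add: abs_mult c_def aa_nonneg)
      also have "\<dots> \<le> c p * 1"
        by (rule mult_left_mono[OF mpow_entry[OF nB]]) (simp add: c_def aa_nonneg)
      finally show "\<bar>c p * mpow B (fst p + snd p) $ i $ j\<bar> \<le> c p" by simp
    qed
    also have "\<dots> = sum c (P N) - sum c (T N)" by (rule sum_diff[OF finP TP])
    also have "sum c (P N) = (s N)^2"
      by (simp add: sq_sum_aa P_def s_def c_def case_prod_beta')
    also have "sum c (T N) = 2 * s N - 1"
      using aa_tri[of N] N2 by (simp add: T_def s_def c_def case_prod_beta')
    finally show ?thesis by (simp add: power2_eq_square algebra_simps)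
  qed
  have slim: "(\<lambda>N. (1 - s N)^2) \<longlonglongrightarrow> 0"
  proof -
    have "(\<lambda>N. (1 - s N)^2) \<longlonglongrightarrow> (1 - suminf aa)^2"
      unfolding s_def by (intro tendsto_intros summable_LIMSEQ[OF aa_summable])
    then show ?thesis by (simp add: aa_suminf)
  qed
  have Elim: "E \<longlonglongrightarrow> 0"
  proof (intro vec_tendstoI)
    fix i j
    have ev: "\<forall>\<^sub>F N in sequentially. norm (E N $ i $ j) \<le> (1 - s N)^2"
      using eventually_ge_at_top[of 2] by eventually_elim (simp add: Ebound)
    show "(\<lambda>N. E N $ i $ j) \<longlonglongrightarrow> 0 $ i $ j"
      using Lim_null_comparison[OF ev slim] by simp
  qed
  have lim1: "(\<lambda>N. RN N ** RN N - 2 *\<^sub>R RN N + B) \<longlonglongrightarrow> 0"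
  proof (rule Lim_transform_eventually[OF Elim])
    show "\<forall>\<^sub>F N in sequentially. E N = RN N ** RN N - 2 *\<^sub>R RN N + B"
      using eventually_ge_at_top[of 2] by eventually_elim (simp add: key)
  qed
  have lim2: "(\<lambda>N. RN N ** RN N - 2 *\<^sub>R RN N + B) \<longlonglongrightarrow> R ** R - 2 *\<^sub>R R + B"
    by (intro tendsto_intros tendsto_mmult RN_lim)
  have RR: "R ** R - 2 *\<^sub>R R + B = 0" using LIMSEQ_unique[OF lim2 lim1] .
  define S where "S = mat 1 - R"
  have SS: "S ** S = mat 1 - B"
  proof -
    have "S ** S = mat 1 - R - (R - R ** R)"
      by (simp add: S_def mm_sub_ldistrib mm_sub_rdistrib)
    also have "R ** R = 2 *\<^sub>R R - B" using RR by (simp add: algebra_simps)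
    finally show ?thesis by (simp add: algebra_simps scaleR_2)
  qed
  have symR: "transpose R = R"
  proof -
    have "mpow B k $ j $ i = mpow B k $ i $ j" for k i j
      using arg_cong[OF mpow_sym[OF symB, of k], of "\<lambda>M. M $ i $ j"] by (simp add: transpose_def)
    then show ?thesis by (simp add: vec_eq_iff transpose_def R_def)
  qed
  have symS: "transpose S = S" by (simp add: S_def transpose_sub symR)
  have psdS: "0 \<le> inner x (S *v x)" for x
  proof -
    have le: "inner x (RN N *v x) \<le> inner x x" for N
    proof -
      have "inner x (RN N *v x) = (\<Sum>k<N. aa k * inner x (mpow B k *v x))"
        by (simp add: RN_def mv_sum_left mv_scaleR_left inner_sum_right)
      also have "\<dots> \<le> (\<Sum>k<N. aa k * inner x x)"
      proof (rule sum_mono)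
        fix k
        have "inner x (mpow B k *v x) \<le> norm x * norm (mpow B k *v x)"
          by (rule norm_cauchy_schwarz)
        also have "\<dots> \<le> norm x * norm x" by (rule mult_left_mono[OF mpow_norm[OF nB]]) simp
        finally show "aa k * inner x (mpow B k *v x) \<le> aa k * inner x x"
          by (intro mult_left_mono aa_nonneg) (simp add: dot_square_norm power2_eq_square)
      qed
      also have "\<dots> = s N * inner x x" by (simp add: s_def sum_distrib_right)
      also have "\<dots> \<le> 1 * inner x x"
        by (rule mult_right_mono) (simp_all add: s_def aa_sum_le1)
      finally show ?thesis by simp
    qed
    have "(\<lambda>N. inner x (RN N *v x)) \<longlonglongrightarrow> inner x (R *v x)"
      by (intro tendsto_intros tendsto_mvmult RN_lim)
    then have "inner x (R *v x) \<le> inner x x"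
      by (rule LIMSEQ_le_const2) (simp add: le)
    then show ?thesis by (simp add: S_def mv_sub_left inner_diff_right)
  qed
  have commS: "C ** S = S ** C" if CB: "C ** B = B ** C" for C
  proof -
    have "C ** RN N = RN N ** C" for N
      by (simp add: RN_def mm_sum_left mm_sum_right mm_scaleR_left mm_scaleR_right mpow_comm[OF CB])
    moreover have "(\<lambda>N. C ** RN N) \<longlonglongrightarrow> C ** R" by (intro tendsto_mmult tendsto_const RN_lim)
    moreover have "(\<lambda>N. RN N ** C) \<longlonglongrightarrow> R ** C" by (intro tendsto_mmult tendsto_const RN_lim)
    ultimately have "C ** R = R ** C" using LIMSEQ_unique by simp
    then show ?thesis by (simp add: S_def mm_sub_ldistrib mm_sub_rdistrib)
  qed
  show ?thesis using symS psdS SS commS by blast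
qed

lemma quad_disc:
  fixes a b c :: real
  assumes "\<And>s. 0 \<le> a + 2 * s * b + s^2 * c" "0 \<le> a" "0 \<le> c"
  shows "b^2 \<le> a * c"
proof (cases "c = 0")
  case True
  show ?thesis
  proof (rule ccontr)
    assume "\<not> ?thesis"
    then have "b \<noteq> 0" using True by simp
    have "0 \<le> a + 2 * (-(a+1)/(2*b)) * b + (-(a+1)/(2*b))^2 * c" by (rule assms(1))
    then show False using True \<open>b \<noteq> 0\<close> by (simp add: field_simps)
  qed
next
  case False
  then have cp: "c > 0" using assms(3) by simp
  have "0 \<le> a + 2 * (-b/c) * b + (-b/c)^2 * c" by (rule assms(1))
  then have "0 \<le> a - b^2 / c" using cp by (simp add: power2_eq_square field_simps)
  then show ?thesis using cp by (simp add: field_simps)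
qed

lemma psd_cs:
  assumes "psd_mat M"
  shows "(inner x ((M::real^'n^'n) *v y))^2 \<le> inner x (M *v x) * inner y (M *v y)"
proof -
  have sym: "transpose M = M" and nn: "\<And>z. 0 \<le> inner z (M *v z)"
    using assms by (auto simp: psd_mat_def)
  have yx: "inner y (M *v x) = inner x (M *v y)"
    by (metis inner_sym sym inner_commute)
  have "0 \<le> inner x (M *v x) + 2 * s * inner x (M *v y) + s^2 * inner y (M *v y)" for s
  proof -
    have "0 \<le> inner (x + s *\<^sub>R y) (M *v (x + s *\<^sub>R y))" by (rule nn)
    also have "\<dots> = inner x (M *v x) + s * inner y (M *v x) + s * inner x (M *v y) + s^2 * inner y (M *v y)"
      by (simp add: matrix_vector_right_distrib matrix_vector_mult_scaleR inner_add_left inner_add_right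
          algebra_simps power2_eq_square)
    finally show ?thesis using yx by (simp add: algebra_simps)
  qed
  then show ?thesis by (rule quad_disc) (simp_all add: nn)
qed

lemma psd_zero:
  assumes "psd_mat M" "inner y ((M::real^'n^'n) *v y) = 0"
  shows "M *v y = 0"
proof -
  have "(inner (M *v y) (M *v y))^2 \<le> 0"
    using psd_cs[OF assms(1), of "M *v y" y] assms(2) by simp
  then show ?thesis by simp
qed

lemma inv_props:
  assumes "invertible (M::real^'n^'m)"
  shows "M ** matrix_inv M = mat 1" "matrix_inv M ** M = mat 1"
  using someI_ex[OF assms[unfolded invertible_def]] by (auto simp: matrix_inv_def)

lemma inv_unique_left:
  assumes "invertible (M::real^'n^'m)" "L ** M = mat 1"
  shows "L = matrix_inv M"
  by (metis assms inv_props(1) matrix_mul_assoc matrix_mul_lid matrix_mul_rid)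

lemma inv_unique_right:
  assumes "invertible (M::real^'n^'m)" "M ** L = mat 1"
  shows "L = matrix_inv M"
  by (metis assms inv_props(2) matrix_mul_assoc matrix_mul_lid matrix_mul_rid)

lemma pd_invertible:
  assumes "pos_def_mat (A::real^'n^'n)"
  shows "invertible A"
proof -
  have "inj ((*v) A)"
  proof (rule injI)
    fix x y assume "A *v x = A *v y"
    then have "A *v (x - y) = 0" by (simp add: matrix_vector_mult_diff_distrib)
    then show "x = y" using assms unfolding pos_def_mat_def
      by (metis eq_iff_diff_eq_0 inner_zero_right less_irrefl)
  qed
  then show ?thesis using matrix_left_invertible_injective invertible_left_inverse by blast
qed

lemma pd_psd: "pos_def_mat A \<Longrightarrow> psd_mat A"
  unfolding pos_def_mat_def psd_mat_def
  by (metis inner_zero_left le_less matrix_vector_mult_0_right)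

lemma psd_sqrt_exists:
  fixes A :: "real^'n^'n"
  assumes pd: "pos_def_mat A"
  shows "\<exists>S. psd_mat S \<and> S ** S = A \<and> (\<forall>C. C ** A = A ** C \<longrightarrow> C ** S = S ** C)"
proof -
  have symA: "transpose A = A" and nnA: "\<And>x. 0 \<le> inner x (A *v x)"
    using pd_psd[OF pd] by (auto simp: psd_mat_def)
  define t where "t = onorm ((*v) A) + 1"
  have t0: "t > 0" using onorm_pos_le[OF matrix_vector_mul_bounded_linear[of A]] unfolding t_def by linarith
  have upA: "inner x (A *v x) \<le> t * inner x x" for x
  proof -
    have "inner x (A *v x) \<le> norm x * norm (A *v x)" by (rule norm_cauchy_schwarz)
    also have "\<dots> \<le> norm x * (onorm ((*v) A) * norm x)"
      by (rule mult_left_mono[OF onorm[OF matrix_vector_mul_bounded_linear]]) simp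
    also have "\<dots> \<le> norm x * (t * norm x)"
      by (intro mult_left_mono mult_right_mono) (auto simp: t_def)
    finally show ?thesis by (simp add: dot_square_norm power2_eq_square mult.commute mult.left_commute)
  qed
  define B where "B = mat 1 - (1/t) *\<^sub>R A"
  have symB: "transpose B = B" by (simp add: B_def transpose_sub transpose_scalar symA)
  have Bx: "inner x (B *v x) = inner x x - inner x (A *v x) / t" for x
    by (simp add: B_def mv_sub_left mv_scaleR_left inner_diff_right)
  have "0 \<le> inner x (B *v x)" for x
  proof -
    have "inner x (A *v x) / t \<le> inner x x" using upA[of x] t0 by (simp add: divide_le_eq mult.commute)
    then show ?thesis using Bx[of x] by simp
  qed
  then have psdB: "psd_mat B"
    unfolding psd_mat_def using symB by auto
  have Bup: "inner x (B *v x) \<le> inner x x" for x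
    using Bx[of x] nnA[of x] t0 by (simp add: divide_nonneg_pos)
  have nB: "norm (B *v x) \<le> norm x" for x
  proof -
    let ?y = "B *v x"
    have "inner ?y ?y = inner x (B *v ?y)" by (metis inner_sym symB)
    then have "(inner ?y ?y)^2 \<le> inner x (B *v x) * inner ?y (B *v ?y)"
      using psd_cs[OF psdB, of x ?y] by simp
    also have "\<dots> \<le> inner x x * inner ?y ?y"
      by (intro mult_mono Bup) (use psdB in \<open>auto simp: psd_mat_def\<close>)
    finally have "(norm ?y ^ 2)^2 \<le> norm x ^ 2 * norm ?y ^ 2" by (simp add: dot_square_norm)
    then have "norm ?y ^ 2 \<le> norm x ^ 2"
      by (cases "norm ?y = 0") (auto simp: power2_eq_square)
    then show ?thesis by (simp add: power2_le_iff_abs_le)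
  qed
  obtain S0 where S0: "transpose S0 = S0" "\<And>x. 0 \<le> inner x (S0 *v x)" "S0 ** S0 = mat 1 - B"
    "\<And>C. C ** B = B ** C \<Longrightarrow> C ** S0 = S0 ** C"
    using sqrt_series[OF symB nB] by blast
  define S where "S = sqrt t *\<^sub>R S0"
  have "S ** S = (sqrt t * sqrt t) *\<^sub>R (S0 ** S0)"
    by (simp add: S_def mm_scaleR_left mm_scaleR_right)
  also have "\<dots> = A" using t0 by (simp add: S0(3) B_def)
  finally have SS: "S ** S = A" .
  have psdS: "psd_mat S"
    unfolding psd_mat_def S_def using S0(1,2) t0
    by (auto simp: transpose_scalar mv_scaleR_left)
  have comm: "C ** S = S ** C" if "C ** A = A ** C" for C
  proof -
    have "C ** B = B ** C" using that
      by (simp add: B_def mm_sub_ldistrib mm_sub_rdistrib mm_scaleR_left mm_scaleR_right)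
    then show ?thesis by (simp add: S_def mm_scaleR_left mm_scaleR_right S0(4))
  qed
  show ?thesis using psdS SS comm by blast
qed

lemma psd_sqrt_unique:
  fixes A :: "real^'n^'n"
  assumes pd: "pos_def_mat A" and S: "psd_mat S" "S ** S = A" and T: "psd_mat T" "T ** T = A"
  shows "S = T"
proof -
  obtain S0 where S0: "psd_mat S0" "S0 ** S0 = A" "\<And>C. C ** A = A ** C \<Longrightarrow> C ** S0 = S0 ** C"
    using psd_sqrt_exists[OF pd] by blast
  have eq: "X = S0" if X: "psd_mat X" "X ** X = A" for X
  proof -
    have "X ** A = A ** X" using X(2) by (metis matrix_mul_assoc)
    then have XS0: "X ** S0 = S0 ** X" using S0(3) by blast
    define D where "D = X - S0"
    have symD: "transpose D = D" using X(1) S0(1) by (simp add: D_def transpose_sub psd_mat_def)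
    have "(X + S0) ** D = X ** X - S0 ** S0 + (S0 ** X - X ** S0)"
      by (simp add: D_def mm_add_rdistrib mm_sub_ldistrib algebra_simps)
    then have Z: "(X + S0) ** D = 0" using X(2) S0(2) XS0 by simp
    have "D *v x = 0" for x
    proof -
      let ?y = "D *v x"
      have "inner ?y (X *v ?y) + inner ?y (S0 *v ?y) = inner ?y ((X + S0) *v ?y)"
        by (simp add: mv_add_left inner_add_right)
      also have "\<dots> = 0" using Z by (simp add: matrix_vector_mul_assoc)
      finally have sum0: "inner ?y (X *v ?y) + inner ?y (S0 *v ?y) = 0" .
      have "0 \<le> inner ?y (X *v ?y)" "0 \<le> inner ?y (S0 *v ?y)" using X(1) S0(1) by (auto simp: psd_mat_def)
      then have "inner ?y (X *v ?y) = 0" "inner ?y (S0 *v ?y) = 0" using sum0 by linarith+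
      then have "X *v ?y = 0" "S0 *v ?y = 0" using psd_zero X(1) S0(1) by blast+
      then have "D *v ?y = 0" by (simp add: D_def mv_sub_left)
      then have "inner ?y ?y = 0" by (metis inner_sym symD inner_zero_right)
      then show ?thesis by simp
    qed
    then have "D = 0" by (simp add: matrix_eq)
    then show ?thesis by (simp add: D_def)
  qed
  show ?thesis using eq[OF S] eq[OF T] by simp
qed

lemma msqrt_props:
  assumes "pos_def_mat (A::real^'n^'n)"
  shows "psd_mat (msqrt A)" "msqrt A ** msqrt A = A"
proof -
  obtain S where "psd_mat S" "S ** S = A" using psd_sqrt_exists[OF assms] by blast
  then have ex: "\<exists>!S. psd_mat S \<and> S ** S = A" using psd_sqrt_unique[OF assms] by blast
  show "psd_mat (msqrt A)" "msqrt A ** msqrt A = A"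
    using theI'[OF ex] by (simp_all add: msqrt_def)
qed




lemma sqrt_facts:
  fixes A :: "real^'n^'n"
  assumes pd: "pos_def_mat A"
  shows "transpose (msqrt A) = msqrt A" "msqrt A ** msqrt A = A"
    "msqrt A ** minvsqrt A = mat 1" "minvsqrt A ** msqrt A = mat 1"
    "transpose (minvsqrt A) = minvsqrt A" "minvsqrt A ** minvsqrt A = matrix_inv A"
    "\<And>x. wnorm x A = norm (msqrt A *v x)" "\<And>x. wnorm x (matrix_inv A) = norm (minvsqrt A *v x)"
    "A ** matrix_inv A = mat 1" "matrix_inv A ** A = mat 1"
proof -
  let ?S = "msqrt A" and ?I = "minvsqrt A"
  have invA: "invertible A" by (rule pd_invertible[OF pd])
  show symS: "transpose ?S = ?S" using msqrt_props(1)[OF pd] by (simp add: psd_mat_def)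
  show SS: "?S ** ?S = A" by (rule msqrt_props(2)[OF pd])
  show AI: "A ** matrix_inv A = mat 1" "matrix_inv A ** A = mat 1" using inv_props[OF invA] by auto
  have "?S ** (?S ** matrix_inv A) = mat 1" by (simp add: matrix_mul_assoc SS AI)
  then have invS: "invertible ?S" unfolding invertible_right_inverse by blast
  show SI: "?S ** ?I = mat 1" "?I ** ?S = mat 1" using inv_props[OF invS] by (auto simp: minvsqrt_def)
  have "transpose (?S ** ?I) = transpose ?I ** ?S" by (simp add: matrix_transpose_mul symS)
  then have "transpose ?I ** ?S = mat 1" using SI(1) by simp
  then have "transpose ?I = matrix_inv ?S" by (rule inv_unique_left[OF invS])
  then show symI: "transpose ?I = ?I" by (simp add: minvsqrt_def)
  have "(?I ** ?I) ** (?S ** ?S) = ?I ** ((?I ** ?S) ** ?S)" by (simp only: matrix_mul_assoc)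
  then have "(?I ** ?I) ** A = mat 1" using SI(2) SS by simp
  then show II: "?I ** ?I = matrix_inv A" by (rule inv_unique_left[OF invA])
  show "wnorm x A = norm (?S *v x)" for x
  proof -
    have "inner x (A *v x) = inner x (?S *v (?S *v x))" by (simp add: matrix_vector_mul_assoc SS)
    also have "\<dots> = inner (?S *v x) (?S *v x)" by (rule inner_sym[OF symS])
    finally have "inner x (A *v x) = inner (?S *v x) (?S *v x)" .
    then show ?thesis by (simp add: wnorm_def norm_eq_sqrt_inner)
  qed
  show "wnorm x (matrix_inv A) = norm (?I *v x)" for x
  proof -
    have "inner x (matrix_inv A *v x) = inner x (?I *v (?I *v x))" by (simp add: matrix_vector_mul_assoc II)
    also have "\<dots> = inner (?I *v x) (?I *v x)" by (rule inner_sym[OF symI])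
    finally have "inner x (matrix_inv A *v x) = inner (?I *v x) (?I *v x)" .
    then show ?thesis by (simp add: wnorm_def norm_eq_sqrt_inner)
  qed
qed

lemma mvt_bound:
  fixes g :: "real^'d \<Rightarrow> real^'m" and Jg :: "real^'d \<Rightarrow> real^'d^'m" and M :: "real^'m^'m"
  assumes deriv: "\<And>x. (g has_derivative (\<lambda>h. Jg x *v h)) (at x)"
    and bound: "\<And>t. 0 \<le> t \<Longrightarrow> t \<le> 1 \<Longrightarrow> norm (M *v ((Jg (p + t *\<^sub>R d) - Jg p) *v d)) \<le> c * t"
    and eq: "g (p + d) = g p"
  shows "norm (M *v (Jg p *v d)) \<le> c / 2"
proof -
  have c0: "0 \<le> c"
  proof -
    have "norm (M *v ((Jg (p + 1 *\<^sub>R d) - Jg p) *v d)) \<le> c * 1" by (rule bound) simp_all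
    moreover have "0 \<le> norm (M *v ((Jg (p + 1 *\<^sub>R d) - Jg p) *v d))" by simp
    ultimately show ?thesis by linarith
  qed
  define v where "v = M *v (Jg p *v d)"
  define f where "f t = inner v (M *v (g (p + t *\<^sub>R d) - t *\<^sub>R (Jg p *v d))) + norm v * c * t^2 / 2" for t
  define f' where "f' t = inner v (M *v ((Jg (p + t *\<^sub>R d) - Jg p) *v d)) + norm v * c * t" for t
  have D: "DERIV f t :> f' t" for t
  proof -
    have d1: "((\<lambda>t. g (p + t *\<^sub>R d)) has_derivative (\<lambda>s. Jg (p + t *\<^sub>R d) *v (s *\<^sub>R d))) (at t)"
      by (rule has_derivative_compose[OF _ deriv]) (auto intro!: derivative_eq_intros)
    have d2: "((\<lambda>t. M *v (g (p + t *\<^sub>R d) - t *\<^sub>R (Jg p *v d))) has_derivative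
              (\<lambda>s. M *v (Jg (p + t *\<^sub>R d) *v (s *\<^sub>R d) - s *\<^sub>R (Jg p *v d)))) (at t)"
      by (rule bounded_linear.has_derivative[OF matrix_vector_mul_bounded_linear])
         (auto intro!: derivative_eq_intros d1)
    have d3: "((\<lambda>t. inner v (M *v (g (p + t *\<^sub>R d) - t *\<^sub>R (Jg p *v d)))) has_derivative
              (\<lambda>s. inner v (M *v (Jg (p + t *\<^sub>R d) *v (s *\<^sub>R d) - s *\<^sub>R (Jg p *v d))))) (at t)"
      by (rule bounded_linear.has_derivative[OF bounded_linear_inner_right d2])
    show ?thesis unfolding f_def f'_def
      by (rule has_derivative_imp_has_field_derivative[OF has_derivative_add[OF d3]])
         (auto intro!: derivative_eq_intros simp: matrix_vector_mult_scaleR mv_sub_left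
           matrix_vector_mult_diff_distrib inner_diff_right algebra_simps power2_eq_square)
  qed
  have "f 0 \<le> f 1"
  proof (rule DERIV_nonneg_imp_nondecreasing[of 0 1 f])
    fix t :: real assume t: "0 \<le> t" "t \<le> 1"
    have "\<bar>inner v (M *v ((Jg (p + t *\<^sub>R d) - Jg p) *v d))\<bar> \<le> norm v * (c * t)"
      using Cauchy_Schwarz_ineq2[of v] bound[OF t] order_trans mult_left_mono norm_ge_zero by metis
    then have "0 \<le> f' t" unfolding f'_def by (simp add: abs_le_iff algebra_simps)
    then show "\<exists>y. DERIV f t :> y \<and> 0 \<le> y" using D by blast
  qed simp
  then have "inner v (M *v g p) \<le> inner v (M *v g p) - inner v v + norm v * c / 2"
    by (simp add: f_def eq v_def matrix_vector_mult_diff_distrib inner_diff_right)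
  then have "norm v * norm v \<le> norm v * (c / 2)" by (simp add: dot_square_norm power2_eq_square)
  then show ?thesis unfolding v_def
    by (cases "norm (M *v (Jg p *v d)) = 0") (auto simp: v_def c0)
qed




lemma arith_core:
  fixes L U Z a qq p :: real
  assumes L: "L > 0" and U: "U \<ge> 0" and Z: "Z \<ge> 0" and LU: "L * U \<le> 1/3"
    and p: "p \<le> L * U^2 / 2" and hz: "Z \<le> 1/(12*L) + L*U*Z + L*U^2/2 + U/4"
    and hq: "qq \<le> a + L*U*Z + U/4" and hu: "U \<le> qq + p"
  shows "qq + U/6 \<le> 4 * a"
proof -
  have e1: "L*U*Z \<le> Z/3" using mult_right_mono[OF LU Z] by simp
  have e2: "L*U^2/2 \<le> U/6" using mult_right_mono[OF LU U] by (simp add: power2_eq_square mult.assoc)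
  have "Z \<le> 1/(8*L) + 5*U/8" using hz e1 e2 by (simp add: field_simps)
  then have "L*U*Z \<le> L*U*(1/(8*L) + 5*U/8)" using L U by (simp add: mult_left_mono)
  also have "\<dots> = U/8 + 5/8 * ((L*U)*U)" using L by (simp add: field_simps)
  also have "\<dots> \<le> U/8 + 5/8 * (1/3 * U)" using mult_right_mono[OF LU U] by simp
  finally have e3: "L*U*Z \<le> U/8 + 5/24 * U" by simp
  show ?thesis using e2 e3 hq hu p by linarith
qed

lemma opnorm2_bound: "norm ((M::real^'n^'m) *v x) \<le> opnorm2 M * norm x"
  unfolding opnorm2_def by (rule onorm[OF matrix_vector_mul_bounded_linear])

lemma opnorm2_nonneg: "0 \<le> opnorm2 (M::real^'n^'m)"
  unfolding opnorm2_def by (rule onorm_pos_le[OF matrix_vector_mul_bounded_linear])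

lemma opnorm2_transpose_bound: "norm (transpose (M::real^'n^'m) *v y) \<le> opnorm2 M * norm y"
proof -
  let ?z = "transpose M *v y"
  have "norm ?z ^ 2 = inner y (M *v ?z)"
    by (simp add: inner_transpose dot_square_norm[symmetric])
  also have "\<dots> \<le> norm y * norm (M *v ?z)" by (rule norm_cauchy_schwarz)
  also have "\<dots> \<le> norm y * (opnorm2 M * norm ?z)" by (rule mult_left_mono[OF opnorm2_bound]) simp
  finally have "norm ?z * norm ?z \<le> (opnorm2 M * norm y) * norm ?z" by (simp add: power2_eq_square algebra_simps)
  then show ?thesis by (cases "norm ?z = 0") (auto simp: opnorm2_nonneg)
qed

lemma opnorm2_le: "(\<And>x. norm ((M::real^'n^'m) *v x) \<le> c * norm x) \<Longrightarrow> opnorm2 M \<le> c"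
  unfolding opnorm2_def by (rule onorm_le)

lemma norm4:
  fixes a b c d :: "'a::real_normed_vector"
  shows "norm (a - b - c - d) \<le> norm a + norm b + norm c + norm d"
proof -
  have "norm (a-b-c-d) \<le> norm (a-b-c) + norm d" by (rule norm_triangle_ineq4)
  moreover have "norm (a-b-c) \<le> norm (a-b) + norm c" by (rule norm_triangle_ineq4)
  moreover have "norm (a-b) \<le> norm a + norm b" by (rule norm_triangle_ineq4)
  ultimately show ?thesis by linarith
qed

lemma norm3:
  fixes a b c :: "'a::real_normed_vector"
  shows "norm (a - b - c) \<le> norm a + norm b + norm c"
proof -
  have "norm (a-b-c) \<le> norm (a-b) + norm c" by (rule norm_triangle_ineq4)
  moreover have "norm (a-b) \<le> norm a + norm b" by (rule norm_triangle_ineq4)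
  ultimately show ?thesis by linarith
qed

theorem proposition2:
  fixes g :: "real^'d \<Rightarrow> real^'m"
    and Jg :: "real^'d \<Rightarrow> real^'d^'m"
    and Hg :: "'m \<Rightarrow> real^'d \<Rightarrow> real^'d^'d"
    and wstar w phistar phi :: "real^'d"
    and lamstar lam :: "real^'m"
    and Sigma :: "real^'d^'d"
    and L :: real
  assumes m_le_d: "CARD('m) \<le> CARD('d)"
    and g_deriv: "\<And>x. (g has_derivative (\<lambda>h. Jg x *v h)) (at x)"
    and g_deriv2: "\<And>i x. ((\<lambda>y. Jg y $ i) has_derivative (\<lambda>h. Hg i x *v h)) (at x)"
    and g_strongly_convex: "\<And>i. \<exists>\<mu>>0. convex_on UNIV (\<lambda>x. g x $ i - \<mu> / 2 * (norm x)\<^sup>2)"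
    and phistar_feas: "\<forall>i. g phistar $ i \<le> 0"
    and phistar_max: "\<And>x. (\<forall>i. g x $ i \<le> 0) \<Longrightarrow> x \<bullet> wstar \<le> phistar \<bullet> wstar"
    and phi_feas: "\<forall>i. g phi $ i \<le> 0"
    and phi_max: "\<And>x. (\<forall>i. g x $ i \<le> 0) \<Longrightarrow> x \<bullet> w \<le> phi \<bullet> w"
    and active_star: "g phistar = 0"
    and active: "g phi = 0"
    and lamstar_nonneg: "\<forall>i. lamstar $ i \<ge> 0"
    and lam_nonneg: "\<forall>i. lam $ i \<ge> 0"
    and kkt_star: "wstar = transpose (Jg phistar) *v lamstar"
    and kkt: "w = transpose (Jg phi) *v lam"
    and H_pd: "pos_def_mat (\<Sum>i\<in>UNIV. lamstar $ i *\<^sub>R Hg i phistar)"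
    and W_inv: "invertible (Jg phistar ** matrix_inv (\<Sum>i\<in>UNIV. lamstar $ i *\<^sub>R Hg i phistar)
                              ** transpose (Jg phistar))"
    and S1: "let H = (\<Sum>i\<in>UNIV. lamstar $ i *\<^sub>R Hg i phistar) in
             wnorm (transpose (Jg phi - Jg phistar) *v lamstar - H *v (phi - phistar)) (matrix_inv H)
               \<le> 1/4 * wnorm (phi - phistar) H"
    and L_pos: "L > 0"
    and S2: "let H = (\<Sum>i\<in>UNIV. lamstar $ i *\<^sub>R Hg i phistar);
                 W = Jg phistar ** matrix_inv H ** transpose (Jg phistar) in
             \<forall>x. opnorm2 (minvsqrt W ** (Jg x - Jg phistar) ** minvsqrt H) \<le> L * wnorm (x - phistar) H"
    and Sigma_pd: "pos_def_mat Sigma"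
    and hyp1: "let H = (\<Sum>i\<in>UNIV. lamstar $ i *\<^sub>R Hg i phistar);
                   W = Jg phistar ** matrix_inv H ** transpose (Jg phistar);
                   PG = minvsqrt H ** transpose (Jg phistar) ** matrix_inv W ** Jg phistar ** minvsqrt H in
               wnorm (phi - phistar) H
                 \<le> opnorm2 ((mat 1 - PG) ** minvsqrt H ** minvsqrt Sigma)
                   / (3 * L * opnorm2 (minvsqrt H ** minvsqrt Sigma))"
    and hyp2: "let H = (\<Sum>i\<in>UNIV. lamstar $ i *\<^sub>R Hg i phistar);
                   W = Jg phistar ** matrix_inv H ** transpose (Jg phistar);
                   PG = minvsqrt H ** transpose (Jg phistar) ** matrix_inv W ** Jg phistar ** minvsqrt H in
               norm (PG *v (minvsqrt H *v (w - wstar))) \<le> 1 / (12 * L)"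
  shows "let H = (\<Sum>i\<in>UNIV. lamstar $ i *\<^sub>R Hg i phistar);
             W = Jg phistar ** matrix_inv H ** transpose (Jg phistar);
             PG = minvsqrt H ** transpose (Jg phistar) ** matrix_inv W ** Jg phistar ** minvsqrt H;
             d = real CARD('d);
             c = 5 / sqrt d * wnorm wstar Sigma
                   * (opnorm2 ((mat 1 - PG) ** minvsqrt H ** minvsqrt Sigma))\<^sup>2;
             r = wnorm (w - wstar) Sigma / wnorm wstar Sigma in
         wnorm (phi - phistar) (matrix_inv Sigma) \<le> c * sqrt d * r
         \<and> w \<bullet> (phi - phistar) \<le> c * sqrt d * wnorm wstar Sigma * r\<^sup>2"
proof -
  define H where "H = (\<Sum>i\<in>UNIV. lamstar $ i *\<^sub>R Hg i phistar)"
  define W where "W = Jg phistar ** matrix_inv H ** transpose (Jg phistar)"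
  define PG where "PG = minvsqrt H ** transpose (Jg phistar) ** matrix_inv W ** Jg phistar ** minvsqrt H"
  define Js where "Js = Jg phistar"
  define J where "J = Jg phi"
  define Hh where "Hh = msqrt H"
  define Hi where "Hi = minvsqrt H"
  have S1': "wnorm (transpose (Jg phi - Jg phistar) *v lamstar - H *v (phi - phistar)) (matrix_inv H)
               \<le> 1/4 * wnorm (phi - phistar) H"
    using S1 unfolding Let_def H_def by blast
  have S2': "\<forall>x. opnorm2 (minvsqrt W ** (Jg x - Jg phistar) ** minvsqrt H) \<le> L * wnorm (x - phistar) H"
    using S2 unfolding Let_def H_def W_def by blast
  have hyp1': "wnorm (phi - phistar) H
                 \<le> opnorm2 ((mat 1 - PG) ** minvsqrt H ** minvsqrt Sigma)
                   / (3 * L * opnorm2 (minvsqrt H ** minvsqrt Sigma))"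
    using hyp1 unfolding Let_def H_def W_def PG_def by blast
  have hyp2': "norm (PG *v (minvsqrt H *v (w - wstar))) \<le> 1 / (12 * L)"
    using hyp2 unfolding Let_def H_def W_def PG_def by blast
  have Hpd: "pos_def_mat H" using H_pd by (simp only: H_def)
  have Winv: "invertible W" using W_inv by (simp only: H_def W_def)
  note HF = sqrt_facts[OF Hpd, folded Hh_def Hi_def]
  have symHh: "transpose Hh = Hh" and symHi: "transpose Hi = Hi" using HF by auto
  have vHhHi: "Hh *v (Hi *v x) = x" for x by (simp add: matrix_vector_mul_assoc HF(3))
  have vHiHh: "Hi *v (Hh *v x) = x" for x by (simp add: matrix_vector_mul_assoc HF(4))
  have vH: "H *v x = Hh *v (Hh *v x)" for x by (simp add: matrix_vector_mul_assoc HF(2))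
  have vHinv: "matrix_inv H *v x = Hi *v (Hi *v x)" for x by (simp add: matrix_vector_mul_assoc HF(6))
  have wnH: "wnorm x H = norm (Hh *v x)" for x using HF(7) by simp
  have wnHinv: "wnorm x (matrix_inv H) = norm (Hi *v x)" for x using HF(8) by simp
  have symHinv: "transpose (matrix_inv H) = matrix_inv H"
    by (simp add: HF(6)[symmetric] matrix_transpose_mul symHi)
  have vW: "W *v x = Js *v (Hi *v (Hi *v (transpose Js *v x)))" for x
    by (simp add: W_def Js_def matrix_vector_mul_assoc[symmetric] vHinv)
  have symW: "transpose W = W"
    by (simp add: W_def matrix_transpose_mul matrix_mul_assoc symHinv)
  have innerW: "inner x (W *v x) = inner (Hi *v (transpose Js *v x)) (Hi *v (transpose Js *v x))" for x
  proof -
    have "inner x (W *v x) = inner (transpose Js *v x) (Hi *v (Hi *v (transpose Js *v x)))"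
      by (simp add: vW inner_transpose)
    also have "\<dots> = inner (Hi *v (transpose Js *v x)) (Hi *v (transpose Js *v x))"
      by (rule inner_sym[OF symHi])
    finally show ?thesis .
  qed
  have injW: "inj ((*v) W)" by (rule inj_matrix_vector_mult[OF Winv])
  have Wpd: "pos_def_mat W"
    unfolding pos_def_mat_def
  proof (intro conjI symW allI impI)
    fix x :: "real^'m" assume x0: "x \<noteq> 0"
    have "W *v x \<noteq> 0" using injW x0 by (metis injD matrix_vector_mult_0_right)
    then have "Hi *v (transpose Js *v x) \<noteq> 0" by (auto simp: vW)
    then show "0 < inner x (W *v x)" by (simp add: innerW)
  qed
  define Wh where "Wh = msqrt W"
  define Wi where "Wi = minvsqrt W"
  note WF = sqrt_facts[OF Wpd, folded Wh_def Wi_def]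
  have symWi: "transpose Wi = Wi" using WF by auto
  have vWhWi: "Wh *v (Wi *v x) = x" for x by (simp add: matrix_vector_mul_assoc WF(3))
  have vWiWh: "Wi *v (Wh *v x) = x" for x by (simp add: matrix_vector_mul_assoc WF(4))
  have vW2: "W *v x = Wh *v (Wh *v x)" for x by (simp add: matrix_vector_mul_assoc WF(2))
  have vWinv: "matrix_inv W *v x = Wi *v (Wi *v x)" for x by (simp add: matrix_vector_mul_assoc WF(6))
  have symWinv: "transpose (matrix_inv W) = matrix_inv W"
    by (simp add: WF(6)[symmetric] matrix_transpose_mul symWi)
  define Sh where "Sh = msqrt Sigma"
  define Si where "Si = minvsqrt Sigma"
  note SF = sqrt_facts[OF Sigma_pd, folded Sh_def Si_def]
  have symSh: "transpose Sh = Sh" and symSi: "transpose Si = Si" using SF by auto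
  have vShSi: "Sh *v (Si *v x) = x" for x by (simp add: matrix_vector_mul_assoc SF(3))
  have vSiSh: "Si *v (Sh *v x) = x" for x by (simp add: matrix_vector_mul_assoc SF(4))
  have wnS: "wnorm x Sigma = norm (Sh *v x)" for x using SF(7) by simp
  have wnSinv: "wnorm x (matrix_inv Sigma) = norm (Si *v x)" for x using SF(8) by simp
  define q where "q z = Hi *v (transpose Js *v (Wi *v z))" for z
  define qt where "qt y = Wi *v (Js *v (Hi *v y))" for y
  have qtq: "qt (q z) = z" for z
  proof -
    have "qt (q z) = Wi *v (W *v (Wi *v z))" by (simp add: q_def qt_def vW)
    then show ?thesis by (simp add: vW2 vWhWi vWiWh)
  qed
  have vPG: "PG *v y = q (qt y)" for y
    by (simp add: PG_def q_def qt_def Js_def Hi_def matrix_vector_mul_assoc[symmetric] vWinv)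
  have inner_q: "inner y (q z) = inner (qt y) z" for y z
  proof -
    have "inner y (q z) = inner (Hi *v y) (transpose Js *v (Wi *v z))"
      unfolding q_def by (rule inner_sym[OF symHi])
    also have "\<dots> = inner (Js *v (Hi *v y)) (Wi *v z)"
      using inner_transpose[of "Hi *v y" "transpose Js" "Wi *v z"] by (simp only: transpose_transpose)
    also have "\<dots> = inner (qt y) z" unfolding qt_def by (rule inner_sym[OF symWi])
    finally show ?thesis .
  qed
  have q_add: "q (a + b) = q a + q b" and q_diff: "q (a - b) = q a - q b" and q0: "q 0 = 0" for a b
    by (simp_all add: q_def matrix_vector_right_distrib matrix_vector_mult_diff_distrib)
  have qt_add: "qt (a + b) = qt a + qt b" and qt_diff: "qt (a - b) = qt a - qt b" and qt0: "qt 0 = 0" for a b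
    by (simp_all add: qt_def matrix_vector_right_distrib matrix_vector_mult_diff_distrib)
  have norm_q: "norm (q z) = norm z" for z
  proof -
    have "inner (q z) (q z) = inner z z" by (simp add: inner_q qtq)
    then show ?thesis by (simp add: norm_eq_sqrt_inner)
  qed
  have norm_qt: "norm (qt y) \<le> norm y" for y
  proof -
    have "norm (qt y) * norm (qt y) = inner (qt y) (qt y)" by (simp add: dot_square_norm power2_eq_square)
    also have "\<dots> = inner y (q (qt y))" by (simp add: inner_q)
    also have "\<dots> \<le> norm y * norm (q (qt y))" by (rule norm_cauchy_schwarz)
    also have "\<dots> = norm y * norm (qt y)" by (simp add: norm_q)
    finally have "norm (qt y) * norm (qt y) \<le> norm y * norm (qt y)" .
    then show ?thesis by (cases "norm (qt y) = 0") auto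
  qed
  define pm where "pm y = y - q (qt y)" for y
  have pm_add: "pm (a + b) = pm a + pm b" and pm_diff: "pm (a - b) = pm a - pm b" for a b
    by (simp_all add: pm_def q_add q_diff qt_add qt_diff algebra_simps)
  have pm_q: "pm (q z) = 0" for z by (simp add: pm_def qtq)
  have qt_pm: "qt (pm y) = 0" for y by (simp add: pm_def qt_diff qtq)
  have pm_pm: "pm (pm y) = pm y" for y using qt_pm[of y] q0 unfolding pm_def by simp
  have norm_pm: "norm (pm y) \<le> norm y" for y
  proof -
    have "inner (pm y) (pm y) = inner y y - inner (qt y) (qt y)"
      by (simp add: pm_def inner_diff_left inner_diff_right inner_q qtq inner_commute)
    then have "norm (pm y) ^ 2 \<le> norm y ^ 2" by (simp add: dot_square_norm)
    then show ?thesis by (simp add: power2_le_iff_abs_le)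
  qed
  define Pm where "Pm = mat 1 - PG"
  have vPm: "Pm *v y = pm y" for y by (simp add: Pm_def mv_sub_left vPG pm_def)
  have symPG: "transpose PG = PG"
    by (simp add: PG_def matrix_transpose_mul matrix_mul_assoc symHi symWinv Hi_def[symmetric])
  have symPm: "transpose Pm = Pm" by (simp add: Pm_def transpose_sub symPG)
  define A where "A = Hi ** Si"
  define Bn where "Bn = opnorm2 (Pm ** A)"
  define An where "An = opnorm2 A"
  have Bn0: "0 \<le> Bn" by (simp add: Bn_def opnorm2_nonneg)
  have An0: "0 \<le> An" by (simp add: An_def opnorm2_nonneg)
  have bnd_pm: "norm (Si *v (Hi *v (pm y))) \<le> Bn * norm (pm y)" for y
  proof -
    have "transpose (Pm ** A) *v (pm y) = Si *v (Hi *v (Pm *v (pm y)))"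
      by (simp add: A_def matrix_transpose_mul symPm symHi symSi matrix_vector_mul_assoc[symmetric])
    also have "\<dots> = Si *v (Hi *v (pm y))" by (simp add: vPm pm_pm)
    finally show ?thesis using opnorm2_transpose_bound[of "Pm ** A" "pm y"] by (simp add: Bn_def)
  qed
  have bnd_A: "norm (Si *v (Hi *v y)) \<le> An * norm y" for y
  proof -
    have "transpose A *v y = Si *v (Hi *v y)"
      by (simp add: A_def matrix_transpose_mul symHi symSi matrix_vector_mul_assoc[symmetric])
    then show ?thesis using opnorm2_transpose_bound[of A y] by (simp add: An_def)
  qed
  have bnd_B: "norm (pm (Hi *v (Si *v y))) \<le> Bn * norm y" for y
  proof -
    have "(Pm ** A) *v y = pm (Hi *v (Si *v y))"
      by (simp add: A_def matrix_vector_mul_assoc[symmetric] vPm)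
    then show ?thesis using opnorm2_bound[of "Pm ** A" y] by (simp add: Bn_def)
  qed
  have BnAn: "Bn \<le> An"
    unfolding Bn_def
  proof (rule opnorm2_le)
    fix x
    have "norm ((Pm ** A) *v x) = norm (pm (A *v x))" by (simp add: matrix_vector_mul_assoc[symmetric] vPm)
    also have "\<dots> \<le> norm (A *v x)" by (rule norm_pm)
    also have "\<dots> \<le> An * norm x" unfolding An_def by (rule opnorm2_bound)
    finally show "norm ((Pm ** A) *v x) \<le> An * norm x" .
  qed
  define dd where "dd = phi - phistar"
  define u where "u = Hh *v dd"
  define U where "U = norm u"
  define mu where "mu = lam - lamstar"
  define z where "z = Wh *v mu"
  define Z where "Z = norm z"
  define e where "e = transpose (J - Js) *v lamstar - H *v dd"
  define K where "K = Wi ** (J - Js) ** Hi"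
  define kt where "kt y = Hi *v (transpose (J - Js) *v (Wi *v y))" for y
  define wd where "wd = w - wstar"
  have U0: "0 \<le> U" by (simp add: U_def)
  have Z0: "0 \<le> Z" by (simp add: Z_def)
  have wnU: "wnorm dd H = U" by (simp add: wnH u_def U_def)
  have he: "norm (Hi *v e) \<le> U / 4"
    using S1' by (simp add: wnHinv wnU[unfolded dd_def] e_def J_def Js_def dd_def)
  have hK: "opnorm2 K \<le> L * U"
    using S2'[rule_format, of phi] by (simp add: K_def Wi_def Hi_def J_def Js_def wnU[unfolded dd_def])
  have hkt: "norm (kt y) \<le> L * U * norm y" for y
  proof -
    have "transpose K *v y = kt y"
      by (simp add: K_def kt_def matrix_transpose_mul symHi symWi matrix_vector_mul_assoc[symmetric])
    then have "norm (kt y) \<le> opnorm2 K * norm y" using opnorm2_transpose_bound[of K y] by simp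
    also have "\<dots> \<le> L * U * norm y" by (rule mult_right_mono[OF hK]) simp
    finally show ?thesis .
  qed
  have star: "Hi *v wd = q z + kt z + u + Hi *v e"
  proof -
    have "wd = transpose Js *v mu + transpose (J - Js) *v mu + e + H *v dd"
      by (simp add: wd_def kkt kkt_star e_def mu_def J_def Js_def transpose_sub mv_sub_left
          matrix_vector_mult_diff_distrib algebra_simps)
    moreover have "Hi *v (transpose Js *v mu) = q z" by (simp add: q_def z_def vWiWh)
    moreover have "Hi *v (transpose (J - Js) *v mu) = kt z" by (simp add: kt_def z_def vWiWh)
    moreover have "Hi *v (H *v dd) = u" by (simp add: vH vHiHh u_def)
    ultimately show ?thesis by (simp add: matrix_vector_right_distrib algebra_simps)
  qed
  have h2: "norm (qt (Hi *v wd)) \<le> 1 / (12 * L)"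
    using hyp2' by (simp add: vPG norm_q wd_def Hi_def)
  \<comment> \<open>second-order bound on the normal component\<close>
  have qtu: "qt u = Wi *v (Js *v dd)" by (simp add: qt_def u_def vHiHh)
  have hp: "norm (qt u) \<le> L * U^2 / 2"
  proof -
    have "norm (Wi *v (Js *v dd)) \<le> L * U^2 / 2"
      unfolding Js_def
    proof (rule mvt_bound[where g=g and Jg=Jg, OF g_deriv])
      fix t :: real assume t: "0 \<le> t" "t \<le> 1"
      let ?x = "phistar + t *\<^sub>R dd"
      let ?Kt = "Wi ** (Jg ?x - Jg phistar) ** Hi"
      have "Wi *v ((Jg ?x - Jg phistar) *v dd) = ?Kt *v u"
        by (simp add: u_def matrix_vector_mul_assoc[symmetric] vHiHh)
      then have "norm (Wi *v ((Jg ?x - Jg phistar) *v dd)) \<le> opnorm2 ?Kt * U"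
        using opnorm2_bound[of ?Kt u] by (simp add: U_def)
      also have "\<dots> \<le> (L * wnorm (?x - phistar) H) * U"
        using S2'[rule_format, of ?x] U0 by (simp add: Wi_def Hi_def mult_right_mono)
      also have "wnorm (?x - phistar) H = t * U"
        using t by (simp add: wnH U_def u_def matrix_vector_mult_scaleR)
      finally show "norm (Wi *v ((Jg ?x - Jg phistar) *v dd)) \<le> L * U^2 * t"
        by (simp add: power2_eq_square algebra_simps)
    next
      show "g (phistar + dd) = g phistar" by (simp add: dd_def active active_star)
    qed
    then show ?thesis by (simp add: qtu)
  qed
  have hz: "Z \<le> 1/(12*L) + L*U*Z + L*U^2/2 + U/4"
  proof -
    have "qt (Hi *v wd) = z + qt (kt z) + qt u + qt (Hi *v e)"
      by (simp add: star qt_add qtq)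
    then have zeq: "z = qt (Hi *v wd) - qt (kt z) - qt u - qt (Hi *v e)" by (simp add: algebra_simps)
    have "Z \<le> norm (qt (Hi *v wd)) + norm (qt (kt z)) + norm (qt u) + norm (qt (Hi *v e))"
      unfolding Z_def using norm4[of "qt (Hi *v wd)" "qt (kt z)" "qt u" "qt (Hi *v e)", folded zeq] .
    moreover have "norm (qt (kt z)) \<le> L*U*Z"
      using norm_qt[of "kt z"] hkt[of z] by (simp add: Z_def)
    moreover have "norm (qt (Hi *v e)) \<le> U/4" using norm_qt[of "Hi *v e"] he by simp
    ultimately show ?thesis using h2 hp by linarith
  qed
  define a where "a = norm (pm (Hi *v wd))"
  define qq where "qq = norm (pm u)"
  have hq: "qq \<le> a + L*U*Z + U/4"
  proof -
    have "pm (Hi *v wd) = pm (kt z) + pm u + pm (Hi *v e)"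
      by (simp add: star pm_add pm_q)
    then have peq: "pm u = pm (Hi *v wd) - pm (kt z) - pm (Hi *v e)" by (simp add: algebra_simps)
    have "qq \<le> a + norm (pm (kt z)) + norm (pm (Hi *v e))"
      unfolding qq_def a_def using norm3[of "pm (Hi *v wd)" "pm (kt z)" "pm (Hi *v e)", folded peq] .
    moreover have "norm (pm (kt z)) \<le> L*U*Z" using norm_pm[of "kt z"] hkt[of z] by (simp add: Z_def)
    moreover have "norm (pm (Hi *v e)) \<le> U/4" using norm_pm[of "Hi *v e"] he by simp
    ultimately show ?thesis by linarith
  qed
  have hu: "U \<le> qq + norm (qt u)"
  proof -
    have "u = pm u + q (qt u)" by (simp add: pm_def)
    then have "U \<le> norm (pm u) + norm (q (qt u))" unfolding U_def by (metis norm_triangle_ineq)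
    then show ?thesis by (simp add: qq_def norm_q)
  qed
  have h1: "U \<le> Bn / (3 * L * An)"
    using hyp1' by (simp add: wnU[unfolded dd_def] Bn_def An_def Pm_def A_def Hi_def Si_def matrix_mul_assoc)
  have LU: "L * U \<le> 1/3" and AnLU: "An * (L * U) \<le> Bn / 3"
  proof -
    have "L * U \<le> 1/3 \<and> An * (L * U) \<le> Bn / 3"
    proof (cases "An = 0")
      case True
      then have "U \<le> 0" using h1 by simp
      then have "U = 0" using U0 by simp
      then show ?thesis using True Bn0 by simp
    next
      case False
      then have Ap: "An > 0" using An0 by simp
      have "L * U \<le> L * (Bn / (3 * L * An))" by (rule mult_left_mono[OF h1]) (use L_pos in simp)
      also have "\<dots> = Bn / (3 * An)" using L_pos by (simp add: field_simps)
      finally have LUB: "L * U \<le> Bn / (3 * An)" .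
      have "Bn / (3 * An) \<le> An / (3 * An)" using BnAn Ap by (simp add: divide_right_mono)
      also have "\<dots> = 1/3" using Ap by simp
      finally have "L * U \<le> 1/3" using LUB by linarith
      moreover have "An * (L * U) \<le> An * (Bn / (3 * An))" by (rule mult_left_mono[OF LUB An0])
      moreover have "An * (Bn / (3 * An)) = Bn / 3" using Ap by simp
      ultimately show ?thesis by simp
    qed
    then show "L * U \<le> 1/3" "An * (L * U) \<le> Bn / 3" by auto
  qed
  have core: "qq + U/6 \<le> 4 * a"
    by (rule arith_core[OF L_pos U0 Z0 LU hp hz hq hu])
  have hSi: "norm (Si *v dd) \<le> Bn * (4 * a)"
  proof -
    have "Si *v dd = Si *v (Hi *v u)" by (simp add: u_def vHiHh)
    also have "\<dots> = Si *v (Hi *v (pm u)) + Si *v (Hi *v (q (qt u)))"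
      by (simp add: pm_def matrix_vector_mult_diff_distrib)
    finally have "norm (Si *v dd) \<le> norm (Si *v (Hi *v (pm u))) + norm (Si *v (Hi *v (q (qt u))))"
      by (metis norm_triangle_ineq)
    also have "\<dots> \<le> Bn * qq + An * norm (qt u)"
      using bnd_pm[of u] bnd_A[of "q (qt u)"] by (simp add: qq_def norm_q add_mono)
    also have "An * norm (qt u) \<le> An * (L * U^2 / 2)" by (rule mult_left_mono[OF hp An0])
    also have "An * (L * U^2 / 2) = (An * (L * U)) * U / 2" by (simp add: power2_eq_square algebra_simps)
    also have "\<dots> \<le> (Bn / 3) * U / 2" by (intro divide_right_mono mult_right_mono AnLU U0) simp
    finally have "norm (Si *v dd) \<le> Bn * (qq + U/6)" by (simp add: algebra_simps)
    also have "\<dots> \<le> Bn * (4 * a)" by (rule mult_left_mono[OF core Bn0])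
    finally show ?thesis .
  qed
  have ha: "a \<le> Bn * norm (Sh *v wd)"
    using bnd_B[of "Sh *v wd"] by (simp add: a_def vSiSh)
  have main1: "norm (Si *v dd) \<le> 5 * Bn^2 * norm (Sh *v wd)"
  proof -
    have "norm (Si *v dd) \<le> Bn * (4 * (Bn * norm (Sh *v wd)))"
      using hSi mult_left_mono[OF ha Bn0] by simp
    also have "\<dots> \<le> 5 * Bn^2 * norm (Sh *v wd)" using Bn0 by (simp add: power2_eq_square)
    finally show ?thesis .
  qed
  have wstar0: "wstar \<noteq> 0"
  proof
    assume w0: "wstar = 0"
    have "W *v lamstar = 0" using w0 by (simp add: vW kkt_star Js_def)
    then have "lamstar = 0" using injW by (metis injD matrix_vector_mult_0_right)
    then have "H = 0" by (simp add: H_def)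
    moreover have "axis (undefined::'d) (1::real) \<noteq> 0" by simp
    ultimately show False using Hpd unfolding pos_def_mat_def by force
  qed
  have ws: "wnorm wstar Sigma > 0"
  proof -
    have "Sh *v wstar \<noteq> 0" using wstar0 by (metis vSiSh matrix_vector_mult_0_right)
    then show ?thesis by (simp add: wnS)
  qed
  have wstar_dd: "inner wstar dd \<le> 0"
    using phistar_max[OF phi_feas] by (simp add: dd_def inner_diff_right inner_commute)
  have inner_wd: "inner wd dd = inner (Sh *v wd) (Si *v dd)"
    by (simp add: inner_sym[OF symSh, symmetric] vShSi)
  have main2: "inner w dd \<le> 5 * Bn^2 * (norm (Sh *v wd))^2"
  proof -
    have "inner w dd = inner wd dd + inner wstar dd" by (simp add: wd_def inner_diff_left)
    also have "\<dots> \<le> inner (Sh *v wd) (Si *v dd)" using wstar_dd inner_wd by simp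
    also have "\<dots> \<le> norm (Sh *v wd) * norm (Si *v dd)" by (rule norm_cauchy_schwarz)
    also have "\<dots> \<le> norm (Sh *v wd) * (5 * Bn^2 * norm (Sh *v wd))"
      by (rule mult_left_mono[OF main1]) simp
    finally show ?thesis by (simp add: power2_eq_square algebra_simps)
  qed
  have dpos: "0 < sqrt (real CARD('d))" by simp
  have Bn_eq: "Bn = opnorm2 ((mat 1 - PG) ** minvsqrt H ** minvsqrt Sigma)"
    by (simp add: Bn_def Pm_def A_def Hi_def Si_def matrix_mul_assoc)
  define c where "c = 5 / sqrt (real CARD('d)) * wnorm wstar Sigma * Bn^2"
  define r where "r = wnorm (w - wstar) Sigma / wnorm wstar Sigma"
  have cr: "c * sqrt (real CARD('d)) * r = 5 * Bn^2 * norm (Sh *v wd)"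
    using dpos ws by (simp add: c_def r_def wnS wd_def field_simps)
  have cr2: "c * sqrt (real CARD('d)) * wnorm wstar Sigma * r^2 = 5 * Bn^2 * (norm (Sh *v wd))^2"
    using dpos ws by (simp add: c_def r_def wnS wd_def field_simps power2_eq_square)
  have concl: "wnorm (phi - phistar) (matrix_inv Sigma) \<le> c * sqrt (real CARD('d)) * r
         \<and> w \<bullet> (phi - phistar) \<le> c * sqrt (real CARD('d)) * wnorm wstar Sigma * r\<^sup>2"
    using main1 main2 cr cr2 by (simp add: wnSinv dd_def)
  show ?thesis
    using concl unfolding Let_def c_def r_def Bn_eq
    by (simp only: H_def W_def PG_def)
qed



end
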